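(* Let $m\ge t\ge 0$ be integers and let $\mathcal{D}_{test}$ be a finite test set. For each $\mathcal{J}\subseteq\{1,\dots,m\}$ with $|\mathcal{J}|=t$, let $A(\mathcal{J})$ be the fraction of test pairs $(\mathbf{c}_{test},y_{test})\in\mathcal{D}_{test}$ such that the clean ensemble prediction $y$ equals $y_{test}$ and $$N_y-\sum_{j\in\mathcal{J}}\mathbb{I}(p_j=y)\ge\max_{l\neq y}\Bigl(N_l+\mathbb{I}(y>l)+\sum_{j\in\mathcal{J}}\mathbb{I}(p_j\neq l)\Bigr),$$ where $p_j$ are the clean base predictions for $\mathbf{c}_{test}$ and $N_l$ the clean vote counts. Suppose an attack changes base predictions only for indices in a fixed set $\mathcal{J}_0$ with $|\mathcal{J}_0|\le t$, the same for all test points. Then the accuracy of the attacked ensemble on the attacked test set is at least $\min_{|\mathcal{J}|=t}A(\mathcal{J})$.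
   Context: Setting (ConceptGuard): concepts partitioned into $m$ disjoint groups; base classifier $f^j$ trained on group $j$; clean base predictions $p_j=f^j(\mathcal{G}^j(\mathbf{c}_{test});\mathcal{D}(\phi))$, clean vote counts $N_l=\sum_j\mathbb{I}(p_j=l)$, ensemble prediction $\arg\max_l N_l$ with ties broken toward the smallest label. An attack that "changes base predictions only for indices in $\mathcal{J}_0$" means the post-attack base predictions equal the clean ones for $j\notin\mathcal{J}_0$. $\mathbb{I}$ is the indicator function. *)

theory Defs
  imports Complex_Main
begin

(* Labels are 0..<K; base classifiers are indexed 1..m; a base prediction
   vector is p :: nat => nat (p j = prediction of base classifier j). *)

definition votes :: "nat \<Rightarrow> (nat \<Rightarrow> nat) \<Rightarrow> nat \<Rightarrow> nat" where
  "votes m p l = (\<Sum>j\<in>{1..m}. if p j = l then 1 else 0)"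

definition ens :: "nat \<Rightarrow> nat \<Rightarrow> (nat \<Rightarrow> nat) \<Rightarrow> nat" where
  "ens K m p = (LEAST l. l < K \<and> (\<forall>l'<K. votes m p l' \<le> votes m p l))"

definition certified :: "nat \<Rightarrow> nat \<Rightarrow> (nat \<Rightarrow> nat) \<Rightarrow> nat \<Rightarrow> nat set \<Rightarrow> bool" where
  "certified K m p y J \<longleftrightarrow>
     ens K m p = y \<and>
     (\<forall>l<K. l \<noteq> y \<longrightarrow>
        int (votes m p y) - (\<Sum>j\<in>J. if p j = y then 1 else 0)
          \<ge> int (votes m p l) + (if y > l then 1 else 0) + (\<Sum>j\<in>J. if p j \<noteq> l then 1 else 0))"

(* A(J): fraction of test pairs of D satisfying the condition;
   pred j c = prediction of base classifier j on concept vector c *)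
definition cert_frac :: "nat \<Rightarrow> nat \<Rightarrow> (nat \<Rightarrow> 'c \<Rightarrow> nat) \<Rightarrow> ('c \<times> nat) list \<Rightarrow> nat set \<Rightarrow> real" where
  "cert_frac K m pred D J =
     real (card {i. i < length D \<and> certified K m (\<lambda>j. pred j (fst (D ! i))) (snd (D ! i)) J})
     / real (length D)"

definition accuracy :: "nat \<Rightarrow> nat \<Rightarrow> (nat \<Rightarrow> 'c \<Rightarrow> nat) \<Rightarrow> ('c \<times> nat) list \<Rightarrow> real" where
  "accuracy K m pred D =
     real (card {i. i < length D \<and> ens K m (\<lambda>j. pred j (fst (D ! i))) = snd (D ! i)})
     / real (length D)"

end

theory Submission
  imports Defs
begin

lemma votes_int: "int (votes m p l) = (\<Sum>j\<in>{1..m}. if p j = l then 1 else (0::int))"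
  unfolding votes_def by (simp add: of_nat_sum if_distrib cong: if_cong)

lemma split_sum:
  fixes m :: nat
  assumes "J \<subseteq> {1..m}"
  shows "(\<Sum>j\<in>{1..m}. f j) = (\<Sum>j\<in>{1..m}-J. f j) + (\<Sum>j\<in>J. (f j::int))"
  using sum.subset_diff[OF assms, of f] by (metis finite_atLeastAtMost)

lemma key:
  assumes J: "J \<subseteq> {1..m}" and agree: "\<forall>j\<in>{1..m}-J. p' j = p j"
    and c: "certified K m p y J" and y: "y < K"
  shows "ens K m p' = y"
proof -
  have fin: "finite J" using J finite_subset by blast
  have lo: "int (votes m p' y) \<ge> int (votes m p y) - (\<Sum>j\<in>J. if p j = y then 1 else 0)"
  proof -
    have "int (votes m p' y) = (\<Sum>j\<in>{1..m}-J. if p' j = y then 1 else (0::int)) + (\<Sum>j\<in>J. if p' j = y then 1 else 0)"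
      unfolding votes_int by (rule split_sum[OF J])
    also have "(\<Sum>j\<in>{1..m}-J. if p' j = y then 1 else (0::int)) = (\<Sum>j\<in>{1..m}-J. if p j = y then 1 else 0)"
      using agree by (intro sum.cong) auto
    finally have a: "int (votes m p' y) = (\<Sum>j\<in>{1..m}-J. if p j = y then 1 else (0::int)) + (\<Sum>j\<in>J. if p' j = y then 1 else 0)" .
    have b: "int (votes m p y) = (\<Sum>j\<in>{1..m}-J. if p j = y then 1 else (0::int)) + (\<Sum>j\<in>J. if p j = y then 1 else 0)"
      unfolding votes_int by (rule split_sum[OF J])
    have "(\<Sum>j\<in>J. if p' j = y then 1 else (0::int)) \<ge> 0" by (intro sum_nonneg) auto
    thus ?thesis using a b by linarith
  qed
  have hi: "int (votes m p' l) \<le> int (votes m p l) + (\<Sum>j\<in>J. if p j \<noteq> l then 1 else 0)" for l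
  proof -
    have "int (votes m p' l) = (\<Sum>j\<in>{1..m}-J. if p' j = l then 1 else (0::int)) + (\<Sum>j\<in>J. if p' j = l then 1 else 0)"
      unfolding votes_int by (rule split_sum[OF J])
    also have "(\<Sum>j\<in>{1..m}-J. if p' j = l then 1 else (0::int)) = (\<Sum>j\<in>{1..m}-J. if p j = l then 1 else 0)"
      using agree by (intro sum.cong) auto
    finally have a: "int (votes m p' l) = (\<Sum>j\<in>{1..m}-J. if p j = l then 1 else (0::int)) + (\<Sum>j\<in>J. if p' j = l then 1 else 0)" .
    have b: "int (votes m p l) = (\<Sum>j\<in>{1..m}-J. if p j = l then 1 else (0::int)) + (\<Sum>j\<in>J. if p j = l then 1 else 0)"
      unfolding votes_int by (rule split_sum[OF J])
    have "(\<Sum>j\<in>J. if p' j = l then 1 else (0::int)) \<le> (\<Sum>j\<in>J. 1)" by (intro sum_mono) auto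
    also have "(\<Sum>j\<in>J. (1::int)) = (\<Sum>j\<in>J. if p j = l then 1 else 0) + (\<Sum>j\<in>J. if p j \<noteq> l then 1 else 0)"
      unfolding sum.distrib[symmetric] by (rule sum.cong) auto
    finally show ?thesis using a b by linarith
  qed
  have strict: "l < K \<Longrightarrow> l \<noteq> y \<Longrightarrow> int (votes m p' l) + (if y > l then 1 else 0) \<le> int (votes m p' y)" for l
    using c lo hi[of l] unfolding certified_def by force
  have P: "y < K \<and> (\<forall>l'<K. votes m p' l' \<le> votes m p' y)"
  proof (intro conjI y allI impI)
    fix l' assume "l' < K"
    show "votes m p' l' \<le> votes m p' y"
    proof (cases "l' = y")
      case False
      with strict[OF \<open>l' < K\<close> False] show ?thesis by (simp split: if_splits)
    qed simp
  qed
  show ?thesis unfolding ens_def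
  proof (rule Least_equality)
    show "y < K \<and> (\<forall>l'<K. votes m p' l' \<le> votes m p' y)" by (rule P)
  next
    fix l assume "l < K \<and> (\<forall>l'<K. votes m p' l' \<le> votes m p' l)"
    hence "l < K" "votes m p' y \<le> votes m p' l" using y by auto
    thus "y \<le> l" using strict[of l] by (cases "l = y") (auto split: if_splits)
  qed
qed

theorem mainTheorem4:
  fixes m t K :: nat and pred :: "nat \<Rightarrow> 'c \<Rightarrow> nat"
    and D D' :: "('c \<times> nat) list" and J0 :: "nat set"
  assumes "t \<le> m" and "0 < K"
    and "\<forall>j\<in>{1..m}. \<forall>c. pred j c < K"
    and "\<forall>i<length D. snd (D ! i) < K"
    and "length D' = length D"
    and "\<forall>i<length D. snd (D' ! i) = snd (D ! i)"
    and "J0 \<subseteq> {1..m}" and "card J0 \<le> t"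
    and "\<forall>i<length D. \<forall>j\<in>{1..m} - J0. pred j (fst (D' ! i)) = pred j (fst (D ! i))"
  shows "accuracy K m pred D' \<ge> Min {cert_frac K m pred D J | J. J \<subseteq> {1..m} \<and> card J = t}"
proof -
  have fJ0: "finite J0" using assms(7) finite_subset by blast
  have "card ({1..m} - J0) = m - card J0" using assms(7) fJ0 by (simp add: card_Diff_subset)
  hence "t - card J0 \<le> card ({1..m} - J0)" using assms(1) by simp
  then obtain B where B: "B \<subseteq> {1..m} - J0" "card B = t - card J0" "finite B"
    by (rule obtain_subset_with_card_n)
  define J where "J = J0 \<union> B"
  have JS: "J \<subseteq> {1..m}" using B assms(7) J_def by auto
  have cJ: "card J = t" unfolding J_def using B fJ0 assms(8)
    by (subst card_Un_disjoint) auto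
  have sub: "{i. i < length D \<and> certified K m (\<lambda>j. pred j (fst (D ! i))) (snd (D ! i)) J}
     \<subseteq> {i. i < length D' \<and> ens K m (\<lambda>j. pred j (fst (D' ! i))) = snd (D' ! i)}"
  proof
    fix i assume "i \<in> {i. i < length D \<and> certified K m (\<lambda>j. pred j (fst (D ! i))) (snd (D ! i)) J}"
    hence i: "i < length D" and c: "certified K m (\<lambda>j. pred j (fst (D ! i))) (snd (D ! i)) J" by auto
    have "ens K m (\<lambda>j. pred j (fst (D' ! i))) = snd (D ! i)"
      by (rule key[OF JS _ c]) (use i assms(4,9) J_def in auto)
    thus "i \<in> {i. i < length D' \<and> ens K m (\<lambda>j. pred j (fst (D' ! i))) = snd (D' ! i)}"
      using i assms(5,6) by auto
  qed
  have "card {i. i < length D \<and> certified K m (\<lambda>j. pred j (fst (D ! i))) (snd (D ! i)) J}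
     \<le> card {i. i < length D' \<and> ens K m (\<lambda>j. pred j (fst (D' ! i))) = snd (D' ! i)}"
    by (rule card_mono[OF _ sub]) auto
  hence le1: "cert_frac K m pred D J \<le> accuracy K m pred D'"
    unfolding cert_frac_def accuracy_def using assms(5) by (simp add: divide_right_mono)
  have fin: "finite {cert_frac K m pred D J | J. J \<subseteq> {1..m} \<and> card J = t}"
  proof -
    have "{cert_frac K m pred D J | J. J \<subseteq> {1..m} \<and> card J = t} \<subseteq> (cert_frac K m pred D) ` Pow {1..m}"
      by auto
    thus ?thesis by (rule finite_subset) auto
  qed
  have "Min {cert_frac K m pred D J | J. J \<subseteq> {1..m} \<and> card J = t} \<le> cert_frac K m pred D J"
    by (rule Min_le[OF fin]) (use JS cJ in auto)
  thus ?thesis using le1 by linarith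
qed

end
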